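(* Let $n \ge 3$ and let $x_1, \dots, x_n \in \mathbb{R}$ be pairwise distinct, and let $h(\theta) = \prod_{j=1}^n (x_j - \theta)$. Then the maximum likelihood estimate $\hat\theta \in \mathbb{H}$ of the sample $x_1,\dots,x_n$ from the Cauchy distribution is a solution in $\mathbb{H}$ of the equation $$n h(\theta) - (\theta - \overline{\theta})\, h'(\theta) = 0.$$
   Context: $\mathbb{H} = \{\theta\in\mathbb{C}:\Im\theta>0\}$ and $\overline{\theta}$ is the complex conjugate. The Cauchy distribution with parameter $\theta = \mu + i\sigma\in\mathbb{H}$ has density $f(x;\theta) = \frac{\sigma}{\pi}\frac{1}{(x-\mu)^2+\sigma^2}$; the maximum likelihood estimate is the (unique) maximizer over $\mathbb{H}$ of $\prod_{j=1}^n f(x_j;\theta)$. *)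

theory Defs
  imports "HOL-Analysis.Analysis"
begin

definition cauchy_density :: "real \<Rightarrow> complex \<Rightarrow> real" where
  "cauchy_density x \<theta> = (Im \<theta> / pi) * (1 / ((x - Re \<theta>)^2 + (Im \<theta>)^2))"

definition cauchy_likelihood :: "nat \<Rightarrow> (nat \<Rightarrow> real) \<Rightarrow> complex \<Rightarrow> real" where
  "cauchy_likelihood n x \<theta> = (\<Prod>j<n. cauchy_density (x j) \<theta>)"

definition is_cauchy_MLE :: "nat \<Rightarrow> (nat \<Rightarrow> real) \<Rightarrow> complex \<Rightarrow> bool" where
  "is_cauchy_MLE n x \<theta> \<longleftrightarrow> Im \<theta> > 0 \<and>
     (\<forall>\<eta>. Im \<eta> > 0 \<longrightarrow> cauchy_likelihood n x \<eta> \<le> cauchy_likelihood n x \<theta>)"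

end

theory Submission
  imports Defs
begin

lemma re_comp:
  assumes "(f has_field_derivative D) (at (complex_of_real t))"
  shows "((\<lambda>s. Re (f (complex_of_real s))) has_real_derivative Re D) (at t)"
proof -
  have "((\<lambda>s. f (complex_of_real s)) has_vector_derivative D) (at t)"
    by (rule has_vector_derivative_real_field[OF assms])
  then show ?thesis by (simp add: has_vector_derivative_complex_iff)
qed

lemma chain_lin:
  fixes f :: "complex \<Rightarrow> complex"
  assumes "(f has_field_derivative D) (at (c + m * w0))"
  shows "((\<lambda>w. f (c + m * w)) has_field_derivative D * m) (at w0)"
proof -
  have "((\<lambda>w. c + m * w) has_field_derivative m) (at w0)"
    by (auto intro!: derivative_eq_intros)
  from DERIV_chain2[OF assms this] show ?thesis .
qed

theorem mainTheorem5:
  fixes n :: nat and x :: "nat \<Rightarrow> real" and \<theta> :: complex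
  assumes "n \<ge> 3"
    and "inj_on x {..<n}"
    and "is_cauchy_MLE n x \<theta>"
  defines "h \<equiv> (\<lambda>z::complex. \<Prod>j<n. (complex_of_real (x j) - z))"
  shows "of_nat n * h \<theta> - (\<theta> - cnj \<theta>) * deriv h \<theta> = 0"
proof -
  define \<sigma> where "\<sigma> = Im \<theta>"
  define a where "a = h \<theta>"
  define b where "b = deriv h \<theta>"
  have sp: "\<sigma> > 0" using assms(3) unfolding is_cauchy_MLE_def \<sigma>_def by simp
  have mx: "\<And>\<eta>. Im \<eta> > 0 \<Longrightarrow> cauchy_likelihood n x \<eta> \<le> cauchy_likelihood n x \<theta>"
    using assms(3) unfolding is_cauchy_MLE_def by simp
  have hol: "h holomorphic_on UNIV" unfolding h_def by (intro holomorphic_intros)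
  have hd: "\<And>z. (h has_field_derivative deriv h z) (at z)"
    using holomorphic_derivI[OF hol open_UNIV] by blast
  have hc: "\<And>z. h (cnj z) = cnj (h z)" unfolding h_def by simp
  have hcc: "cnj \<circ> h \<circ> cnj = h" by (rule ext) (simp add: hc)
  have hd': "(h has_field_derivative cnj b) (at (cnj \<theta>))"
    using has_field_derivative_cnj_cnj[of h b "cnj \<theta>"] hd[of \<theta>] unfolding b_def hcc by simp
  have nsq: "\<And>w. complex_of_real ((cmod (h w))^2) = h w * h (cnj w)"
    by (simp add: complex_norm_square[symmetric] hc)
  have hnz: "\<And>\<eta>. Im \<eta> > 0 \<Longrightarrow> h \<eta> \<noteq> 0"
  proof
    fix \<eta> assume "Im \<eta> > 0" "h \<eta> = 0"
    then obtain j where "complex_of_real (x j) - \<eta> = 0" unfolding h_def by auto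
    then have "Im (complex_of_real (x j) - \<eta>) = 0" by simp
    with \<open>Im \<eta> > 0\<close> show False by simp
  qed
  have lik: "\<And>\<eta>. cauchy_likelihood n x \<eta> = (Im \<eta> / pi)^n / (cmod (h \<eta>))^2"
  proof -
    fix \<eta>
    have "\<And>j. cauchy_density (x j) \<eta> = (Im \<eta> / pi) / (cmod (complex_of_real (x j) - \<eta>))^2"
      unfolding cauchy_density_def by (simp add: cmod_power2 power2_commute)
    then have "cauchy_likelihood n x \<eta> = (\<Prod>j<n. (Im \<eta> / pi) / (cmod (complex_of_real (x j) - \<eta>))^2)"
      unfolding cauchy_likelihood_def by simp
    also have "\<dots> = (Im \<eta> / pi)^n / (\<Prod>j<n. cmod (complex_of_real (x j) - \<eta>))^2"
      by (simp only: prod_dividef prod_constant card_lessThan prod_power_distrib power_divide)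
    also have "\<dots> = (Im \<eta> / pi)^n / (cmod (h \<eta>))^2"
      unfolding h_def prod_norm by simp
    finally show "cauchy_likelihood n x \<eta> = (Im \<eta> / pi)^n / (cmod (h \<eta>))^2" .
  qed
  have ineq: "\<And>\<eta>. Im \<eta> > 0 \<Longrightarrow> (Im \<eta>)^n * (cmod a)^2 \<le> \<sigma>^n * (cmod (h \<eta>))^2"
  proof -
    fix \<eta> assume ip: "Im \<eta> > 0"
    have "(Im \<eta> / pi)^n / (cmod (h \<eta>))^2 \<le> (\<sigma> / pi)^n / (cmod a)^2"
      using mx[OF ip] unfolding lik a_def \<sigma>_def .
    moreover have "(cmod (h \<eta>))^2 > 0" using hnz[OF ip] by simp
    moreover have "(cmod a)^2 > 0" using hnz[OF sp[unfolded \<sigma>_def]] unfolding a_def by simp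
    ultimately have "(Im \<eta> / pi)^n * (cmod a)^2 \<le> (\<sigma> / pi)^n * (cmod (h \<eta>))^2"
      by (simp add: divide_simps)
    then have "(Im \<eta>)^n * (cmod a)^2 / pi^n \<le> \<sigma>^n * (cmod (h \<eta>))^2 / pi^n"
      by (simp add: power_divide)
    then show "(Im \<eta>)^n * (cmod a)^2 \<le> \<sigma>^n * (cmod (h \<eta>))^2"
      by (simp add: divide_right_mono_neg divide_le_cancel)
  qed
  define z where "z = b * cnj a"
  define g1 where "g1 = (\<lambda>s::real. Re (h (\<theta> + of_real s) * h (cnj \<theta> + of_real s)))"
  have g1: "\<And>s. g1 s = (cmod (h (\<theta> + of_real s)))^2"
  proof -
    fix s
    have "complex_of_real ((cmod (h (\<theta> + of_real s)))^2) = h (\<theta> + of_real s) * h (cnj \<theta> + of_real s)"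
      using nsq[of "\<theta> + of_real s"] by simp
    then show "g1 s = (cmod (h (\<theta> + of_real s)))^2" unfolding g1_def
      by (metis Re_complex_of_real)
  qed
  have dg1: "(g1 has_real_derivative Re (b * cnj a + a * cnj b)) (at 0)"
  proof -
    have "((\<lambda>w. h (\<theta> + w) * h (cnj \<theta> + w)) has_field_derivative (b * cnj a + a * cnj b)) (at (complex_of_real 0))"
    proof -
      have d1: "((\<lambda>w. h (\<theta> + w)) has_field_derivative b) (at 0)"
        using chain_lin[of h b \<theta> 1 0] hd[of \<theta>, folded b_def] by simp
      have d2: "((\<lambda>w. h (cnj \<theta> + w)) has_field_derivative cnj b) (at 0)"
        using chain_lin[of h "cnj b" "cnj \<theta>" 1 0] hd' by simp
      have "((\<lambda>w. h (\<theta> + w) * h (cnj \<theta> + w)) has_field_derivative (b * h (cnj \<theta>) + h \<theta> * cnj b)) (at 0)"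
        using DERIV_mult[OF d1 d2] by (simp add: algebra_simps)
      then show ?thesis by (simp add: hc a_def)
    qed
    from re_comp[OF this] show ?thesis unfolding g1_def by simp
  qed
  have H: "Re (b * cnj a + a * cnj b) = 0"
  proof (rule DERIV_local_min[OF dg1, of 1])
    show "\<forall>y. \<bar>0 - y\<bar> < 1 \<longrightarrow> g1 0 \<le> g1 y"
    proof (intro allI impI)
      fix y :: real
      have "\<sigma>^n * (cmod a)^2 \<le> \<sigma>^n * (cmod (h (\<theta> + of_real y)))^2"
        using ineq[of "\<theta> + of_real y"] sp unfolding \<sigma>_def by simp
      then have "(cmod a)^2 \<le> (cmod (h (\<theta> + of_real y)))^2" using sp by simp
      then show "g1 0 \<le> g1 y" unfolding g1 by (simp add: a_def)
    qed
  qed simp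
  define k where "k = (\<lambda>s::real. \<sigma>^n * Re (h (\<theta> + \<i> * of_real s) * h (cnj \<theta> - \<i> * of_real s)) - (cmod a)^2 * (\<sigma> + s)^n)"
  have k: "\<And>s. k s = \<sigma>^n * (cmod (h (\<theta> + \<i> * of_real s)))^2 - (cmod a)^2 * (\<sigma> + s)^n"
  proof -
    fix s
    have "complex_of_real ((cmod (h (\<theta> + \<i> * of_real s)))^2) = h (\<theta> + \<i> * of_real s) * h (cnj \<theta> - \<i> * of_real s)"
      using nsq[of "\<theta> + \<i> * of_real s"] by simp
    then have "Re (h (\<theta> + \<i> * of_real s) * h (cnj \<theta> - \<i> * of_real s)) = (cmod (h (\<theta> + \<i> * of_real s)))^2"
      by (metis Re_complex_of_real)
    then show "k s = \<sigma>^n * (cmod (h (\<theta> + \<i> * of_real s)))^2 - (cmod a)^2 * (\<sigma> + s)^n"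
      unfolding k_def by simp
  qed
  have dk: "(k has_real_derivative (\<sigma>^n * Re (\<i> * b * cnj a - \<i> * a * cnj b) - (cmod a)^2 * (of_nat n * \<sigma>^(n-1)))) (at 0)"
  proof -
    have "((\<lambda>w. h (\<theta> + \<i> * w) * h (cnj \<theta> - \<i> * w)) has_field_derivative (\<i> * b * cnj a - \<i> * a * cnj b)) (at (complex_of_real 0))"
    proof -
      have d1: "((\<lambda>w. h (\<theta> + \<i> * w)) has_field_derivative b * \<i>) (at 0)"
        using chain_lin[of h b \<theta> \<i> 0] hd[of \<theta>, folded b_def] by simp
      have d2: "((\<lambda>w. h (cnj \<theta> - \<i> * w)) has_field_derivative cnj b * (- \<i>)) (at 0)"
        using chain_lin[of h "cnj b" "cnj \<theta>" "- \<i>" 0] hd' by simp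
      have "((\<lambda>w. h (\<theta> + \<i> * w) * h (cnj \<theta> - \<i> * w)) has_field_derivative (b * \<i> * h (cnj \<theta>) + h \<theta> * (cnj b * (- \<i>)))) (at 0)"
        using DERIV_mult[OF d1 d2] by (simp add: algebra_simps)
      then show ?thesis by (simp add: hc a_def algebra_simps)
    qed
    from re_comp[OF this] have "((\<lambda>s. Re (h (\<theta> + \<i> * of_real s) * h (cnj \<theta> - \<i> * of_real s))) has_real_derivative Re (\<i> * b * cnj a - \<i> * a * cnj b)) (at 0)"
      by (simp only: of_real_0)
    moreover have "((\<lambda>s. (\<sigma> + s)^n) has_real_derivative of_nat n * 1 * (\<sigma> + 0)^(n-1)) (at 0)"
      by (auto intro!: derivative_eq_intros)
    ultimately have "(k has_real_derivative (\<sigma>^n * Re (\<i> * b * cnj a - \<i> * a * cnj b) - (cmod a)^2 * (of_nat n * 1 * (\<sigma> + 0)^(n-1)))) (at 0)"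
      unfolding k_def by (intro DERIV_diff DERIV_cmult)
    then show ?thesis by simp
  qed
  have V: "\<sigma>^n * Re (\<i> * b * cnj a - \<i> * a * cnj b) - (cmod a)^2 * (of_nat n * \<sigma>^(n-1)) = 0"
  proof (rule DERIV_local_min[OF dk, of \<sigma>])
    show "\<forall>y. \<bar>0 - y\<bar> < \<sigma> \<longrightarrow> k 0 \<le> k y"
    proof (intro allI impI)
      fix y :: real assume "\<bar>0 - y\<bar> < \<sigma>"
      then have "Im (\<theta> + \<i> * of_real y) > 0" unfolding \<sigma>_def by simp
      from ineq[OF this] have "(\<sigma> + y)^n * (cmod a)^2 \<le> \<sigma>^n * (cmod (h (\<theta> + \<i> * of_real y)))^2"
        unfolding \<sigma>_def by simp
      then show "k 0 \<le> k y" unfolding k by (simp add: a_def algebra_simps)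
    qed
  qed (use sp in simp)
  have Hz: "Re z = 0" using H unfolding z_def by (simp add: algebra_simps)
  have Vz: "2 * \<sigma> * Im z + of_nat n * (cmod a)^2 = 0"
  proof -
    have n1: "\<sigma>^n = \<sigma> * \<sigma>^(n-1)" using assms(1) by (cases n) auto
    have "\<sigma>^(n-1) * (-2 * \<sigma> * Im z - of_nat n * (cmod a)^2) = 0"
      using V unfolding n1 z_def by (simp add: algebra_simps)
    then show ?thesis using sp by simp
  qed
  have anz: "a \<noteq> 0" using hnz[OF sp[unfolded \<sigma>_def]] unfolding a_def .
  have tt: "\<theta> - cnj \<theta> = 2 * \<i> * complex_of_real \<sigma>"
    unfolding \<sigma>_def by (simp add: complex_eq_iff)
  have "(of_nat n * a - 2 * \<i> * complex_of_real \<sigma> * b) * cnj a = of_nat n * complex_of_real ((cmod a)^2) - 2 * \<i> * complex_of_real \<sigma> * z"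
    unfolding z_def complex_norm_square by (simp add: algebra_simps)
  also have "\<dots> = 0" using Hz Vz by (simp add: complex_eq_iff)
  finally have "of_nat n * a - 2 * \<i> * complex_of_real \<sigma> * b = 0" using anz by simp
  then show ?thesis unfolding tt a_def b_def .
qed

end
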